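(* Let $\Phi:(\mathcal{S},g)\to(\mathcal{M},\bar g)$ be an isometric immersion of an $n$-dimensional orientable Riemannian manifold into a semi-Riemannian manifold with co-dimension $k$, and assume that $\dim\mathrm{Im}\,\widetilde h_p$ is constant on $\mathcal{S}$, so that the umbilical space $\mathscr{U}$ of $\mathcal{S}$ is well defined. Let $0\le m\le k$. Then $\dim\mathscr{U}=m$ if and only if the total shear tensor satisfies $\bigwedge^{k-m+1}\widetilde h^\flat=0$ and $\bigwedge^{k-m}\widetilde h^\flat\neq0$.
   Context: $g=\Phi^\star\bar g$ is positive definite. $h$ is the second fundamental form, $A_\xi$ the shape operator of a normal $\xi$ ($g(A_\xi X,Y)=\bar g(h(X,Y),\xi)$), $H=\frac1n\mathrm{tr}_gh$, and $\widetilde h(X,Y)=h(X,Y)-g(X,Y)H$ is the total shear tensor. The shear space at $p$ is $\mathrm{Im}\,\widetilde h_p=\mathrm{span}\{\widetilde h(v,w):v,w\in T_p\mathcal{S}\}$; the umbilical space at $p$ is $\mathscr{U}_p=\{\xi_p\in T_p\mathcal{S}^\perp:A_{\xi_p}\text{ proportional to the identity}\}$. Under constant dimension, the umbilical space of $\mathcal{S}$ is $\mathscr{U}=\{\xi\text{ normal vector field}:A_\xi\text{ proportional to identity}\}$, a module over functions on $\mathcal{S}$ of dimension $\dim\mathscr{U}_p$. For a vector $V$, $V^\flat=\bar g(V,\cdot)$; $\bigwedge^q\widetilde h^\flat$ denotes the map $(X_1,Y_1,\dots,X_q,Y_q)\mapsto\widetilde h(X_1,Y_1)^\flat\wedge\cdots\wedge\widetilde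 h(X_q,Y_q)^\flat$ for tangent vector fields $X_i,Y_i$. *)

theory Defs
  imports "HOL-Analysis.Analysis" "HOL-Combinatorics.Permutations"
begin

(* Pointwise model of an isometric immersion at a point p:
   T_pS = real^'n (coordinates), dPhi : T_pS -> T_{Phi p}M = real^'m the differential,
   gbar the (semi-Riemannian) metric of M at Phi p, h the second fundamental form
   (normal-valued symmetric bilinear map on T_pS). *)

definition induced_metric ::
  "(real^'n \<Rightarrow> real^'m) \<Rightarrow> (real^'m \<Rightarrow> real^'m \<Rightarrow> real) \<Rightarrow> real^'n \<Rightarrow> real^'n \<Rightarrow> real"
  where "induced_metric dPhi gbar X Y = gbar (dPhi X) (dPhi Y)"

definition normal_space ::
  "(real^'n \<Rightarrow> real^'m) \<Rightarrow> (real^'m \<Rightarrow> real^'m \<Rightarrow> real) \<Rightarrow> (real^'m) set"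
  where "normal_space dPhi gbar = {\<xi>. \<forall>X. gbar (dPhi X) \<xi> = 0}"

definition gram :: "(real^'n \<Rightarrow> real^'n \<Rightarrow> real) \<Rightarrow> real^'n^'n"
  where "gram g = (\<chi> i j. g (axis i 1) (axis j 1))"

definition trace_g ::
  "(real^'n \<Rightarrow> real^'n \<Rightarrow> real) \<Rightarrow> (real^'n \<Rightarrow> real^'n \<Rightarrow> real^'m) \<Rightarrow> real^'m"
  where "trace_g g h = (\<Sum>i\<in>UNIV. \<Sum>j\<in>UNIV. (matrix_inv (gram g) $ i $ j) *\<^sub>R h (axis i 1) (axis j 1))"

definition mean_curv ::
  "(real^'n \<Rightarrow> real^'n \<Rightarrow> real) \<Rightarrow> (real^'n \<Rightarrow> real^'n \<Rightarrow> real^'m) \<Rightarrow> real^'m"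
  where "mean_curv g h = (1 / real CARD('n)) *\<^sub>R trace_g g h"

definition shear ::
  "(real^'n \<Rightarrow> real^'n \<Rightarrow> real) \<Rightarrow> (real^'n \<Rightarrow> real^'n \<Rightarrow> real^'m) \<Rightarrow> real^'n \<Rightarrow> real^'n \<Rightarrow> real^'m"
  where "shear g h X Y = h X Y - g X Y *\<^sub>R mean_curv g h"

definition shear_space ::
  "(real^'n \<Rightarrow> real^'n \<Rightarrow> real) \<Rightarrow> (real^'n \<Rightarrow> real^'n \<Rightarrow> real^'m) \<Rightarrow> (real^'m) set"
  where "shear_space g h = span {shear g h v w | v w. True}"

definition shape_op ::
  "(real^'n \<Rightarrow> real^'n \<Rightarrow> real) \<Rightarrow> (real^'m \<Rightarrow> real^'m \<Rightarrow> real) \<Rightarrow> (real^'n \<Rightarrow> real^'n \<Rightarrow> real^'m)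
     \<Rightarrow> real^'m \<Rightarrow> real^'n \<Rightarrow> real^'n"
  where "shape_op g gbar h \<xi> X = (THE Z. \<forall>Y. g Z Y = gbar (h X Y) \<xi>)"

definition umbilical_space ::
  "(real^'n \<Rightarrow> real^'m) \<Rightarrow> (real^'m \<Rightarrow> real^'m \<Rightarrow> real) \<Rightarrow> (real^'n \<Rightarrow> real^'n \<Rightarrow> real^'m) \<Rightarrow> (real^'m) set"
  where "umbilical_space dPhi gbar h =
     {\<xi> \<in> normal_space dPhi gbar.
        \<exists>c::real. \<forall>X. shape_op (induced_metric dPhi gbar) gbar h \<xi> X = c *\<^sub>R X}"

definition flat :: "(real^'m \<Rightarrow> real^'m \<Rightarrow> real) \<Rightarrow> real^'m \<Rightarrow> real^'m \<Rightarrow> real"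
  where "flat gbar V = gbar V"

(* wedge product of q covectors w_0,...,w_{q-1}, as alternating q-form:
   (w_0 /\ ... /\ w_{q-1})(v_0,...,v_{q-1}) = det [w_i(v_j)]; empty wedge = 1 *)
definition wedge :: "nat \<Rightarrow> (nat \<Rightarrow> 'v \<Rightarrow> real) \<Rightarrow> (nat \<Rightarrow> 'v) \<Rightarrow> real"
  where "wedge q w vs = (\<Sum>\<sigma> | \<sigma> permutes {..<q}. of_int (sign \<sigma>) * (\<Prod>i<q. w i (vs (\<sigma> i))))"

definition wedge_shear_zero ::
  "nat \<Rightarrow> (real^'n \<Rightarrow> real^'m) \<Rightarrow> (real^'m \<Rightarrow> real^'m \<Rightarrow> real) \<Rightarrow> (real^'n \<Rightarrow> real^'n \<Rightarrow> real^'m) \<Rightarrow> bool"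
  where "wedge_shear_zero q dPhi gbar h \<longleftrightarrow>
     (\<forall>Xs Ys :: nat \<Rightarrow> real^'n. \<forall>vs :: nat \<Rightarrow> real^'m.
        wedge q (\<lambda>i. flat gbar (shear (induced_metric dPhi gbar) h (Xs i) (Ys i))) vs = 0)"

end

theory Submission
  imports Defs "Jordan_Normal_Form.Determinant"
begin

lemma det_nat_zero_iff:
  fixes M :: "nat \<Rightarrow> nat \<Rightarrow> real"
  shows "(\<Sum>\<sigma> | \<sigma> permutes {..<q}. of_int (sign \<sigma>) * (\<Prod>i<q. M i (\<sigma> i))) = 0 \<longleftrightarrow>
    (\<exists>c. (\<exists>i<q. c i \<noteq> 0) \<and> (\<forall>i<q. (\<Sum>j<q. M i j * c j) = 0))"
proof -
  define A where "A = Matrix.mat q q (\<lambda>(i,j). M i j)"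
  have A: "A \<in> carrier_mat q q" unfolding A_def by simp
  have "Determinant.det A = (\<Sum>\<sigma> | \<sigma> permutes {..<q}. of_int (sign \<sigma>) * (\<Prod>i<q. M i (\<sigma> i)))"
    unfolding Determinant.det_def A_def
    by (simp add: atLeast0LessThan)
  moreover have rowi: "(A *\<^sub>v v) $ i = (\<Sum>j<q. M i j * v $ j)" if "i < q" "v \<in> carrier_vec q" for i v
    using that unfolding A_def by (simp add: scalar_prod_def atLeast0LessThan mult.commute)
  have "(\<exists>v. v \<in> carrier_vec q \<and> v \<noteq> 0\<^sub>v q \<and> A *\<^sub>v v = 0\<^sub>v q) \<longleftrightarrow>
    (\<exists>c. (\<exists>i<q. c i \<noteq> 0) \<and> (\<forall>i<q. (\<Sum>j<q. M i j * c j) = 0))"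
  proof
    assume "\<exists>v. v \<in> carrier_vec q \<and> v \<noteq> 0\<^sub>v q \<and> A *\<^sub>v v = 0\<^sub>v q"
    then obtain v where v: "v \<in> carrier_vec q" "v \<noteq> 0\<^sub>v q" "A *\<^sub>v v = 0\<^sub>v q" by blast
    have "\<exists>i<q. v $ i \<noteq> 0"
    proof (rule ccontr)
      assume "\<not> ?thesis"
      then have "v = 0\<^sub>v q" using v(1) by (intro eq_vecI) auto
      with v(2) show False by simp
    qed
    moreover have "\<forall>i<q. (\<Sum>j<q. M i j * v $ j) = 0"
      using rowi[OF _ v(1)] v(3) A
      by (metis carrier_matD(1) index_mult_mat_vec index_zero_vec(1))
    ultimately show "\<exists>c. (\<exists>i<q. c i \<noteq> 0) \<and> (\<forall>i<q. (\<Sum>j<q. M i j * c j) = 0)" by blast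
  next
    assume "\<exists>c. (\<exists>i<q. c i \<noteq> 0) \<and> (\<forall>i<q. (\<Sum>j<q. M i j * c j) = 0)"
    then obtain c where c: "\<exists>i<q. c i \<noteq> 0" "\<forall>i<q. (\<Sum>j<q. M i j * c j) = 0" by blast
    define v where "v = Matrix.vec q c"
    have v: "v \<in> carrier_vec q" unfolding v_def by simp
    have "\<forall>i<q. (\<Sum>j<q. M i j * v $ j) = (\<Sum>j<q. M i j * c j)" unfolding v_def by simp
    then have "A *\<^sub>v v = 0\<^sub>v q" using c(2) rowi[OF _ v] A
      by (intro eq_vecI) auto
    moreover have "v \<noteq> 0\<^sub>v q" using c(1) unfolding v_def
      by (metis index_vec index_zero_vec(1))
    ultimately show "\<exists>v. v \<in> carrier_vec q \<and> v \<noteq> 0\<^sub>v q \<and> A *\<^sub>v v = 0\<^sub>v q" using v by blast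
  qed
  ultimately show ?thesis using det_0_iff_vec_prod_zero[OF A] by simp
qed

lemma det_nat_zero_iff_left:
  fixes M :: "nat \<Rightarrow> nat \<Rightarrow> real"
  shows "(\<Sum>\<sigma> | \<sigma> permutes {..<q}. of_int (sign \<sigma>) * (\<Prod>i<q. M i (\<sigma> i))) = 0 \<longleftrightarrow>
    (\<exists>c. (\<exists>i<q. c i \<noteq> 0) \<and> (\<forall>j<q. (\<Sum>i<q. c i * M i j) = 0))"
proof -
  define A where "A = Matrix.mat q q (\<lambda>(i,j). M i j)"
  have A: "A \<in> carrier_mat q q" unfolding A_def by simp
  have e: "Determinant.det B = (\<Sum>\<sigma> | \<sigma> permutes {..<q}. of_int (sign \<sigma>) * (\<Prod>i<q. N i (\<sigma> i)))"
    if "B = Matrix.mat q q (\<lambda>(i,j). N i j)" for B and N :: "nat \<Rightarrow> nat \<Rightarrow> real"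
    unfolding Determinant.det_def that
    by (simp add: atLeast0LessThan)
  have "transpose_mat A = Matrix.mat q q (\<lambda>(i,j). M j i)" unfolding A_def by auto
  then have "(\<Sum>\<sigma> | \<sigma> permutes {..<q}. of_int (sign \<sigma>) * (\<Prod>i<q. M i (\<sigma> i))) =
     (\<Sum>\<sigma> | \<sigma> permutes {..<q}. of_int (sign \<sigma>) * (\<Prod>i<q. M (\<sigma> i) i))"
    using e[OF A_def] e[of "transpose_mat A" "\<lambda>i j. M j i"] det_transpose[OF A] by simp
  also have "\<dots> = 0 \<longleftrightarrow> (\<exists>c. (\<exists>i<q. c i \<noteq> 0) \<and> (\<forall>j<q. (\<Sum>i<q. M i j * c i) = 0))"
    using det_nat_zero_iff[where q=q and M="\<lambda>i j. M j i"] by simp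
  finally show ?thesis by (simp add: mult.commute)
qed
no_notation vec_index (infixl "$" 100)
no_notation scalar_prod (infix "\<bullet>" 70)

lemma bilinear_lsum: "bilinear h \<Longrightarrow> h (\<Sum>i\<in>S. f i) y = (\<Sum>i\<in>S. h (f i) y)"
  unfolding bilinear_def using linear_sum[of "\<lambda>x. h x y"] by blast

lemma bilinear_rsum: "bilinear h \<Longrightarrow> h y (\<Sum>i\<in>S. f i) = (\<Sum>i\<in>S. h y (f i))"
  unfolding bilinear_def using linear_sum[of "\<lambda>x. h y x"] by blast

definition bvec :: "(real^'a \<Rightarrow> real) \<Rightarrow> real^'a" where
  "bvec f = (\<chi> k. f (axis k 1))"

lemma linear_expand:
  fixes f :: "real^'a \<Rightarrow> real"
  assumes "linear f"
  shows "f v = bvec f \<bullet> v"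
proof -
  have "f v = f (\<Sum>k\<in>UNIV. v$k *\<^sub>R axis k 1)"
    using basis_expansion[of v] by (simp add: scalar_mult_eq_scaleR)
  also have "\<dots> = (\<Sum>k\<in>UNIV. v$k * f (axis k 1))"
    using assms by (simp add: linear_sum linear_scale)
  also have "\<dots> = bvec f \<bullet> v" by (simp add: bvec_def inner_vec_def mult.commute)
  finally show ?thesis .
qed

lemma bvec_linear:
  fixes b :: "real^'a \<Rightarrow> real^'a \<Rightarrow> real"
  assumes "bilinear b"
  shows "linear (\<lambda>u. bvec (b u))"
  using assms unfolding bvec_def
  by (intro linearI) (auto simp: Finite_Cartesian_Product.vec_eq_iff bilinear_ladd bilinear_lmul)

lemma bvec_inner:
  fixes b :: "real^'a \<Rightarrow> real^'a \<Rightarrow> real"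
  assumes "bilinear b"
  shows "b u v = bvec (b u) \<bullet> v"
  using assms linear_expand[of "b u"] unfolding bilinear_def by blast

lemma bvec_inj:
  fixes b :: "real^'a \<Rightarrow> real^'a \<Rightarrow> real"
  assumes "bilinear b" "\<And>u. (\<forall>v. b u v = 0) \<Longrightarrow> u = 0"
  shows "inj (\<lambda>u. bvec (b u))"
proof -
  have "u = 0" if "bvec (b u) = 0" for u
    using assms(2)[of u] bvec_inner[OF assms(1), of u] that by simp
  then show ?thesis using bvec_linear[OF assms(1)]
    by (simp add: linear_inj_iff_eq_0)
qed

lemma wedge_zero_iff:
  fixes b :: "real^'a \<Rightarrow> real^'a \<Rightarrow> real" and u :: "nat \<Rightarrow> real^'a"
  assumes bl: "bilinear b" and nd: "\<And>u. (\<forall>v. b u v = 0) \<Longrightarrow> u = 0"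
  shows "(\<forall>vs. wedge q (\<lambda>i. b (u i)) vs = 0) \<longleftrightarrow> (\<exists>c. (\<exists>i<q. c i \<noteq> 0) \<and> (\<Sum>i<q. c i *\<^sub>R u i) = 0)"
proof
  assume "\<exists>c. (\<exists>i<q. c i \<noteq> 0) \<and> (\<Sum>i<q. c i *\<^sub>R u i) = 0"
  then obtain c where c: "\<exists>i<q. c i \<noteq> 0" "(\<Sum>i<q. c i *\<^sub>R u i) = 0" by blast
  show "\<forall>vs. wedge q (\<lambda>i. b (u i)) vs = 0"
  proof
    fix vs :: "nat \<Rightarrow> real^'a"
    have "(\<Sum>i<q. c i * b (u i) (vs j)) = 0" for j
    proof -
      have "(\<Sum>i<q. c i * b (u i) (vs j)) = b (\<Sum>i<q. c i *\<^sub>R u i) (vs j)"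
        by (simp add: bilinear_lsum[OF bl] bilinear_lmul[OF bl])
      also have "\<dots> = 0" using c(2) bilinear_lzero[OF bl] by simp
      finally show ?thesis .
    qed
    then show "wedge q (\<lambda>i. b (u i)) vs = 0"
      unfolding wedge_def using det_nat_zero_iff_left[where q=q and M="\<lambda>i j. b (u i) (vs j)"] c(1)
      by blast
  qed
next
  assume H: "\<forall>vs. wedge q (\<lambda>i. b (u i)) vs = 0"
  define vs where "vs j = bvec (b (u j))" for j
  have M: "b (u i) (vs j) = bvec (b (u i)) \<bullet> bvec (b (u j))" for i j
    using bvec_inner[OF bl] vs_def by simp
  from H[rule_format, of vs] obtain c where c: "\<exists>i<q. c i \<noteq> 0"
      "\<forall>i<q. (\<Sum>j<q. b (u i) (vs j) * c j) = 0"
    unfolding wedge_def using det_nat_zero_iff[where q=q and M="\<lambda>i j. b (u i) (vs j)"] by blast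
  define w where "w = (\<Sum>j<q. c j *\<^sub>R u j)"
  have lin: "linear (\<lambda>u. bvec (b u))" by (rule bvec_linear[OF bl])
  have bw: "bvec (b w) = (\<Sum>j<q. c j *\<^sub>R bvec (b (u j)))"
    unfolding w_def using linear_sum[OF lin, of "\<lambda>j. c j *\<^sub>R u j" "{..<q}"] linear_scale[OF lin] by simp
  have "bvec (b w) \<bullet> bvec (b w) = (\<Sum>i<q. c i * (bvec (b (u i)) \<bullet> bvec (b w)))"
    unfolding bw by (simp add: inner_sum_left)
  also have "\<dots> = (\<Sum>i<q. c i * (\<Sum>j<q. b (u i) (vs j) * c j))"
    unfolding M by (subst bw) (simp add: inner_sum_right mult.commute)
  also have "\<dots> = 0" using c(2) by simp
  finally have "bvec (b w) = 0" by simp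
  then have "w = 0" using bvec_inj[OF bl nd] linear_0[OF lin] by (metis injD)
  then have "(\<Sum>i<q. c i *\<^sub>R u i) = 0" using w_def by simp
  then show "\<exists>c. (\<exists>i<q. c i \<noteq> 0) \<and> (\<Sum>i<q. c i *\<^sub>R u i) = 0" using c(1) by (intro exI[of _ c]) simp
qed

lemma fam_dep_iff:
  fixes T :: "(real^'a) set"
  assumes Tne: "T \<noteq> {}"
  shows "(\<forall>u. (\<forall>i. u i \<in> T) \<longrightarrow> (\<exists>c. (\<exists>i<q. c i \<noteq> 0) \<and> (\<Sum>i<q. c i *\<^sub>R u i) = 0))
         \<longleftrightarrow> dim T < q"
proof
  assume H: "\<forall>u. (\<forall>i. u i \<in> T) \<longrightarrow> (\<exists>c. (\<exists>i<q. c i \<noteq> 0) \<and> (\<Sum>i<q. c i *\<^sub>R u i) = 0)"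
  show "dim T < q"
  proof (rule ccontr)
    assume "\<not> dim T < q"
    then have qle: "q \<le> dim T" by simp
    obtain B where B: "B \<subseteq> T" "independent B" "card B = dim T"
      by (rule basis_exists[of T])
    obtain B' where B': "B' \<subseteq> B" "card B' = q" "finite B'"
    proof (rule obtain_subset_with_card_n[of q B])
      show "q \<le> card B" using qle B(3) by simp
    qed
    obtain f where f: "bij_betw f {0..<q} B'" using ex_bij_betw_nat_finite[OF B'(3)] unfolding B'(2) by blast
    obtain t0 where t0: "t0 \<in> T" using Tne by blast
    define u where "u i = (if i < q then f i else t0)" for i
    have uT: "\<forall>i. u i \<in> T" unfolding u_def using f B B' t0 bij_betwE by fastforce
    from H uT obtain c where c: "\<exists>i<q. c i \<noteq> 0" "(\<Sum>i<q. c i *\<^sub>R u i) = 0" by blast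
    have indB': "independent B'" using B(2) B'(1) independent_mono by blast
    define g where "g = the_inv_into {0..<q} f"
    have "(\<Sum>v\<in>B'. c (g v) *\<^sub>R v) = (\<Sum>i\<in>{0..<q}. c (g (f i)) *\<^sub>R f i)"
      using sum.reindex_bij_betw[OF f, of "\<lambda>v. c (g v) *\<^sub>R v"] by simp
    also have "\<dots> = (\<Sum>i<q. c i *\<^sub>R u i)"
      unfolding g_def u_def using f
      by (intro sum.cong) (auto simp: bij_betw_def the_inv_into_f_f atLeast0LessThan)
    finally have "(\<Sum>v\<in>B'. c (g v) *\<^sub>R v) = 0" using c(2) by simp
    moreover have "\<forall>c. (\<Sum>v\<in>B'. c v *\<^sub>R v) = 0 \<longrightarrow> (\<forall>v\<in>B'. c v = 0)"
      using iffD1[OF independent_explicit indB'] by simp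
    ultimately have z: "\<forall>v\<in>B'. c (g v) = 0" by (auto dest: spec[where x="\<lambda>v. c (g v)"])
    have "c i = 0" if "i < q" for i
    proof -
      have fi: "f i \<in> B'" using f that bij_betwE by fastforce
      have "g (f i) = i" unfolding g_def using f that
        by (simp add: bij_betw_def the_inv_into_f_f)
      then show ?thesis using z fi by metis
    qed
    then have "\<forall>i<q. c i = 0" by blast
    with c(1) show False by blast
  qed
next
  assume dq: "dim T < q"
  show "\<forall>u. (\<forall>i. u i \<in> T) \<longrightarrow> (\<exists>c. (\<exists>i<q. c i \<noteq> 0) \<and> (\<Sum>i<q. c i *\<^sub>R u i) = 0)"
  proof (intro allI impI)
    fix u :: "nat \<Rightarrow> real^'a"
    assume uT: "\<forall>i. u i \<in> T"
    show "\<exists>c. (\<exists>i<q. c i \<noteq> 0) \<and> (\<Sum>i<q. c i *\<^sub>R u i) = 0"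
    proof (cases "inj_on u {..<q}")
      case False
      then obtain i j where ij: "i < q" "j < q" "i \<noteq> j" "u i = u j"
        unfolding inj_on_def by blast
      define c where "c k = (if k = i then 1 else 0) - (if k = j then 1 else (0::real))" for k
      have "(\<Sum>k<q. c k *\<^sub>R u k) = (\<Sum>k<q. (if k = i then u k else 0)) - (\<Sum>k<q. (if k = j then u k else 0))"
      proof -
        have "c k *\<^sub>R u k = (if k = i then u k else 0) - (if k = j then u k else 0)" for k
          unfolding c_def by (simp add: scaleR_left_diff_distrib)
        then show ?thesis by (simp add: sum_subtractf)
      qed
      also have "\<dots> = 0" using ij by simp
      finally have s: "(\<Sum>k<q. c k *\<^sub>R u k) = 0" .
      have "c i \<noteq> 0" using ij unfolding c_def by simp
      then show ?thesis using s ij(1) by blast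
    next
      case True
      define U where "U = u ` {..<q}"
      have cardU: "card U = q" unfolding U_def using True card_image by fastforce
      have UT: "U \<subseteq> T" unfolding U_def using uT by blast
      have "\<not> independent U"
      proof
        assume "independent U"
        then have "card U \<le> dim T" using independent_card_le_dim UT by blast
        with cardU dq show False by simp
      qed
      moreover have finU: "finite U" unfolding U_def by simp
      ultimately obtain d where d: "(\<Sum>v\<in>U. d v *\<^sub>R v) = 0" "\<exists>v\<in>U. d v \<noteq> 0"
        using independent_explicit by blast
      have "(\<Sum>i<q. d (u i) *\<^sub>R u i) = (\<Sum>v\<in>U. d v *\<^sub>R v)"
        unfolding U_def using sum.reindex[OF True, of "\<lambda>v. d v *\<^sub>R v"] by simp
      then show ?thesis using d unfolding U_def
        by (intro exI[of _ "\<lambda>i. d (u i)"]) auto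
    qed
  qed
qed
lemma dim_Un_trivial:
  fixes A B :: "'a::euclidean_space set"
  assumes "span A \<inter> span B \<subseteq> {0}"
  shows "dim(A \<union> B) = dim A + dim B"
proof -
  have "dim(A \<union> B) = dim (span (A \<union> B))"
    by (simp)
  also have "span (A \<union> B) = ((\<lambda>(a, b). a + b) ` (span A \<times> span B))"
    by (auto simp add: span_Un image_def)
  also have "dim \<dots> = dim {x + y |x y. x \<in> span A \<and> y \<in> span B}"
    by (auto intro!: arg_cong [where f=dim])
  also have "\<dots> = dim {x + y |x y. x \<in> span A \<and> y \<in> span B} + dim(span A \<inter> span B)"
  proof -
    have "span A \<inter> span B = span {}" using assms span_zero by auto
    then show ?thesis by simp
  qed
  also have "\<dots> = dim A + dim B"
    using dim_sums_Int by fastforce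
  finally show ?thesis .
qed

lemma dim_orth_set:
  fixes b :: "real^'m \<Rightarrow> real^'m \<Rightarrow> real" and W :: "(real^'m) set"
  assumes bl: "bilinear b" and nd: "\<And>u. (\<forall>v. b u v = 0) \<Longrightarrow> u = 0"
  shows "dim {\<xi>. \<forall>w\<in>W. b w \<xi> = 0} + dim W = CARD('m)"
proof -
  define \<phi> where "\<phi> u = bvec (b u)" for u
  have lin: "linear \<phi>" unfolding \<phi>_def by (rule bvec_linear[OF bl])
  have inj: "inj \<phi>" unfolding \<phi>_def by (rule bvec_inj[OF bl nd])
  define A where "A = span (\<phi> ` W)"
  have "{\<xi>. \<forall>w\<in>W. b w \<xi> = 0} = {y \<in> UNIV. \<forall>x \<in> A. Linear_Algebra.orthogonal x y}"
  proof (intro Set.set_eqI iffI)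
    fix \<xi> assume xi: "\<xi> \<in> {\<xi>. \<forall>w\<in>W. b w \<xi> = 0}"
    have "\<forall>x\<in>\<phi> ` W. Linear_Algebra.orthogonal \<xi> x"
    proof
      fix x assume "x \<in> \<phi> ` W"
      then obtain w where w: "w \<in> W" "x = \<phi> w" by blast
      have "b w \<xi> = 0" using w(1) xi by simp
      then have "\<phi> w \<bullet> \<xi> = 0" using bvec_inner[OF bl, of w \<xi>] unfolding \<phi>_def by simp
      then show "Linear_Algebra.orthogonal \<xi> x" using w(2) unfolding Linear_Algebra.orthogonal_def by (simp add: inner_commute)
    qed
    then have "\<forall>x\<in>A. Linear_Algebra.orthogonal \<xi> x" unfolding A_def using orthogonal_to_span[of _ "\<phi> ` W" \<xi>] by blast
    then show "\<xi> \<in> {y \<in> UNIV. \<forall>x \<in> A. Linear_Algebra.orthogonal x y}" by (simp add: orthogonal_commute)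
  next
    fix \<xi> assume "\<xi> \<in> {y \<in> UNIV. \<forall>x \<in> A. Linear_Algebra.orthogonal x y}"
    then have "\<forall>w\<in>W. Linear_Algebra.orthogonal (\<phi> w) \<xi>" unfolding A_def using span_superset[of "\<phi> ` W"] by blast
    then have "b w \<xi> = 0" if "w \<in> W" for w using bvec_inner[OF bl, of w \<xi>] that
      unfolding \<phi>_def Linear_Algebra.orthogonal_def by simp
    then show "\<xi> \<in> {\<xi>. \<forall>w\<in>W. b w \<xi> = 0}" by simp
  qed
  moreover have "dim {y \<in> UNIV. \<forall>x \<in> A. Linear_Algebra.orthogonal x y} + dim A = dim (UNIV :: (real^'m) set)"
    by (rule dim_subspace_orthogonal_to_vectors) (auto simp: A_def)
  moreover have "dim A = dim W"
    unfolding A_def dim_span using dim_image_eq[OF lin] inj by (metis inj_on_subset subset_UNIV)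
  ultimately show ?thesis by simp
qed

lemma pointwise:
  fixes L :: "real^'n \<Rightarrow> real^'m" and b :: "real^'m \<Rightarrow> real^'m \<Rightarrow> real"
    and H :: "real^'n \<Rightarrow> real^'n \<Rightarrow> real^'m"
  assumes Llin: "linear L" and Linj: "inj L" and bl: "bilinear b"
    and bsym: "\<And>u v. b u v = b v u" and nd: "\<And>u. (\<forall>v. b u v = 0) \<Longrightarrow> u = 0"
    and pd: "\<And>X. X \<noteq> 0 \<Longrightarrow> induced_metric L b X X > 0"
    and Hbl: "bilinear H" and Hn: "\<And>X Y. H X Y \<in> normal_space L b"
  shows "dim (umbilical_space L b H) + CARD('n) + dim (shear_space (induced_metric L b) H) = CARD('m)"
proof -
  define g where "g = induced_metric L b"
  have gdef: "g X Y = b (L X) (L Y)" for X Y unfolding g_def induced_metric_def by simp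
  have gbl: "bilinear g"
  proof -
    have "linear (\<lambda>Y. g X Y)" for X
      unfolding gdef using linear_compose[OF Llin, of "b (L X)"] bl unfolding bilinear_def o_def by blast
    moreover have "linear (\<lambda>X. g X Y)" for Y
      unfolding gdef using linear_compose[OF Llin, of "\<lambda>x. b x (L Y)"] bl unfolding bilinear_def o_def by blast
    ultimately show ?thesis unfolding bilinear_def by blast
  qed
  have gsym: "g X Y = g Y X" for X Y unfolding gdef using bsym by simp
  have gpd: "X \<noteq> 0 \<Longrightarrow> g X X > 0" for X using pd unfolding g_def by blast
  have gnd: "u = 0" if "\<forall>v. g u v = 0" for u using that gpd by force
  have guniq: "Z = Z'" if "\<forall>Y. g Z Y = g Z' Y" for Z Z'
  proof -
    have "g (Z - Z') (Z - Z') = 0" using that bilinear_lsub[OF gbl] by simp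
    then have "Z - Z' = 0" using gpd by (metis less_irrefl)
    then show ?thesis by simp
  qed
  have riesz: "\<exists>Z. \<forall>Y. g Z Y = f Y" if "linear f" for f
  proof -
    have "surj (\<lambda>Z. bvec (g Z))"
      using linear_injective_imp_surjective[OF bvec_linear[OF gbl] bvec_inj[OF gbl gnd]] by simp
    then obtain Z where "bvec (g Z) = bvec f" by (metis surjD)
    then have "g Z Y = f Y" for Y using bvec_inner[OF gbl, of Z Y] linear_expand[OF that, of Y] by simp
    then show ?thesis by blast
  qed
  define e :: "'n \<Rightarrow> real^'n" where "e i = axis i 1" for i
  define G where "G = gram g"
  have Gij: "G $ i $ j = g (e i) (e j)" for i j unfolding G_def gram_def e_def by simp
  have Gv: "(G *v x) $ i = g (e i) x" for x i
  proof -
    have "g (e i) x = bvec (g (e i)) \<bullet> x" by (rule bvec_inner[OF gbl])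
    also have "\<dots> = (\<Sum>j\<in>UNIV. G $ i $ j * x $ j)"
      unfolding bvec_def inner_vec_def Gij e_def by simp
    finally show ?thesis by (simp add: matrix_vector_mult_def)
  qed
  have xGx: "x \<bullet> (G *v x) = g x x" for x
  proof -
    have "x \<bullet> (G *v x) = (\<Sum>i\<in>UNIV. x $ i * g (e i) x)" unfolding inner_vec_def Gv by simp
    also have "\<dots> = g (\<Sum>i\<in>UNIV. x $ i *\<^sub>R e i) x"
      by (simp add: bilinear_lsum[OF gbl] bilinear_lmul[OF gbl])
    also have "(\<Sum>i\<in>UNIV. x $ i *\<^sub>R e i) = x"
      unfolding e_def using basis_expansion[of x] by (simp add: scalar_mult_eq_scaleR)
    finally show ?thesis .
  qed
  have "invertible G"
    unfolding invertible_left_inverse matrix_left_invertible_ker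
    using xGx gpd by (metis inner_zero_right less_irrefl)
  then have GiG: "matrix_inv G ** G = Finite_Cartesian_Product.mat 1"
    unfolding invertible_def matrix_inv_def by (metis (mono_tags, lifting) someI_ex)
  define Gi where "Gi = matrix_inv G"
  have trace: "(\<Sum>i\<in>UNIV. \<Sum>j\<in>UNIV. Gi $ i $ j * g (e i) (e j)) = real CARD('n)"
  proof -
    have "(\<Sum>j\<in>UNIV. Gi $ i $ j * g (e i) (e j)) = 1" for i
    proof -
      have "(Gi ** G) $ i $ i = 1" using GiG unfolding Gi_def by (simp add: Finite_Cartesian_Product.mat_def)
      then show ?thesis unfolding matrix_matrix_mult_def Gij using gsym by simp
    qed
    then show ?thesis by simp
  qed
  define mc where "mc = mean_curv g H"
  have mc_def2: "mc = (1 / real CARD('n)) *\<^sub>R (\<Sum>i\<in>UNIV. \<Sum>j\<in>UNIV. Gi $ i $ j *\<^sub>R H (e i) (e j))"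
    unfolding mc_def mean_curv_def trace_g_def Gi_def G_def e_def by simp
  define Sh where "Sh = {shear g H v w |v w. True}"
  have shear_eq: "shear g H v w = H v w - g v w *\<^sub>R mc" for v w
    unfolding shear_def mc_def by simp
  define N where "N = normal_space L b"
  have Ndef: "\<xi> \<in> N \<longleftrightarrow> (\<forall>X. b (L X) \<xi> = 0)" for \<xi> unfolding N_def normal_space_def by simp
  have umb: "\<xi> \<in> umbilical_space L b H \<longleftrightarrow> \<xi> \<in> N \<and> (\<forall>v\<in>Sh. b v \<xi> = 0)" for \<xi>
  proof
    assume U: "\<xi> \<in> umbilical_space L b H"
    then have xN: "\<xi> \<in> N" unfolding umbilical_space_def N_def by simp
    from U obtain c where c: "\<forall>X. shape_op g b H \<xi> X = c *\<^sub>R X"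
      unfolding umbilical_space_def g_def by blast
    have hc: "b (H X Y) \<xi> = c * g X Y" for X Y
    proof -
      have lf: "linear (\<lambda>Y. b (H X Y) \<xi>)"
        using linear_compose[of "H X" "\<lambda>v. b v \<xi>"] Hbl bl unfolding bilinear_def o_def by blast
      obtain Z where Z: "\<forall>Y. g Z Y = b (H X Y) \<xi>" using riesz[OF lf] by blast
      have "shape_op g b H \<xi> X = Z"
        unfolding shape_op_def
        by (rule the_equality) (use Z guniq in auto)
      then have "Z = c *\<^sub>R X" using c by simp
      then show ?thesis using Z bilinear_lmul[OF gbl] by simp
    qed
    have bmc: "b mc \<xi> = c"
    proof -
      have "b mc \<xi> = (1 / real CARD('n)) * (\<Sum>i\<in>UNIV. \<Sum>j\<in>UNIV. Gi $ i $ j * b (H (e i) (e j)) \<xi>)"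
        unfolding mc_def2 by (simp add: bilinear_lsum[OF bl] bilinear_lmul[OF bl])
      also have "\<dots> = (1 / real CARD('n)) * (c * (\<Sum>i\<in>UNIV. \<Sum>j\<in>UNIV. Gi $ i $ j * g (e i) (e j)))"
        unfolding hc by (simp add: sum_distrib_left mult.left_commute)
      also have "\<dots> = c" unfolding trace by simp
      finally show ?thesis .
    qed
    have "\<forall>v\<in>Sh. b v \<xi> = 0"
      unfolding Sh_def shear_eq using hc bmc by (auto simp: bilinear_lsub[OF bl] bilinear_lmul[OF bl])
    then show "\<xi> \<in> N \<and> (\<forall>v\<in>Sh. b v \<xi> = 0)" using xN by blast
  next
    assume A: "\<xi> \<in> N \<and> (\<forall>v\<in>Sh. b v \<xi> = 0)"
    define c where "c = b mc \<xi>"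
    have hX: "b (H X Y) \<xi> = g (c *\<^sub>R X) Y" for X Y
    proof -
      have "b (shear g H X Y) \<xi> = 0" using A unfolding Sh_def by blast
      then show ?thesis unfolding shear_eq c_def
        by (simp add: bilinear_lsub[OF bl] bilinear_lmul[OF bl] bilinear_lmul[OF gbl])
    qed
    have "shape_op g b H \<xi> X = c *\<^sub>R X" for X
      unfolding shape_op_def
    proof (rule the_equality)
      show "\<forall>Y. g (c *\<^sub>R X) Y = b (H X Y) \<xi>" using hX by simp
      fix Z assume "\<forall>Y. g Z Y = b (H X Y) \<xi>"
      then show "Z = c *\<^sub>R X" using guniq hX by simp
    qed
    then show "\<xi> \<in> umbilical_space L b H"
      using A unfolding umbilical_space_def N_def g_def by blast
  qed
  have Ueq: "umbilical_space L b H = {\<xi>. \<forall>w\<in>range L \<union> Sh. b w \<xi> = 0}"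
    using umb Ndef by blast
  have NS: "subspace N"
    unfolding subspace_def using bl
    by (auto simp: Ndef bilinear_rzero bilinear_radd bilinear_rmul)
  have mcN: "mc \<in> N"
    unfolding mc_def2 using NS Hn N_def
    by (intro subspace_scale subspace_sum) auto
  have ShN: "Sh \<subseteq> N"
    unfolding Sh_def shear_eq using NS mcN Hn N_def
    by (auto intro!: subspace_diff subspace_scale)
  have int: "span (range L) \<inter> span Sh \<subseteq> {0}"
  proof
    fix x assume x: "x \<in> span (range L) \<inter> span Sh"
    then obtain X where X: "x = L X" using span_linear_image[OF Llin, of UNIV] by auto
    have "x \<in> N" using x span_minimal[OF ShN NS] by blast
    then have "g X X = 0" using X Ndef gdef by simp
    then have "X = 0" using gpd by force
    then show "x \<in> {0}" using X linear_0[OF Llin] by simp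
  qed
  have dimL: "dim (range L) = CARD('n)"
    using dim_image_eq[OF Llin, of UNIV] Linj by simp
  have "dim (umbilical_space L b H) + dim (range L \<union> Sh) = CARD('m)"
    unfolding Ueq by (rule dim_orth_set[OF bl nd])
  moreover have "dim (range L \<union> Sh) = CARD('n) + dim Sh"
    using dim_Un_trivial[OF int] dimL by simp
  moreover have "dim (shear_space g H) = dim Sh"
    unfolding shear_space_def Sh_def by simp
  ultimately show ?thesis unfolding g_def by simp
qed

lemma wsz_iff:
  fixes L :: "real^'n \<Rightarrow> real^'m" and b :: "real^'m \<Rightarrow> real^'m \<Rightarrow> real"
    and H :: "real^'n \<Rightarrow> real^'n \<Rightarrow> real^'m"
  assumes bl: "bilinear b" and nd: "\<And>u. (\<forall>v. b u v = 0) \<Longrightarrow> u = 0"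
  shows "wedge_shear_zero q L b H \<longleftrightarrow> dim (shear_space (induced_metric L b) H) < q"
proof -
  define g where "g = induced_metric L b"
  define Sh where "Sh = {shear g H v w |v w. True}"
  define P where "P u \<longleftrightarrow> (\<exists>c. (\<exists>i<q. c i \<noteq> 0) \<and> (\<Sum>i<q. c i *\<^sub>R u i) = (0::real^'m))" for u
  have wq: "(\<forall>vs. wedge q (\<lambda>i. b (shear g H (Xs i) (Ys i))) vs = 0) \<longleftrightarrow> P (\<lambda>i. shear g H (Xs i) (Ys i))" for Xs Ys
    unfolding P_def by (rule wedge_zero_iff[OF bl nd])
  have "wedge_shear_zero q L b H \<longleftrightarrow> (\<forall>Xs Ys. P (\<lambda>i. shear g H (Xs i) (Ys i)))"
    unfolding wedge_shear_zero_def flat_def g_def[symmetric] using wq by blast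
  also have "\<dots> \<longleftrightarrow> (\<forall>u::nat \<Rightarrow> real^'m. (\<forall>i. u i \<in> Sh) \<longrightarrow> P u)"
  proof
    assume A: "\<forall>Xs Ys. P (\<lambda>i. shear g H (Xs i) (Ys i))"
    show "\<forall>u::nat \<Rightarrow> real^'m. (\<forall>i. u i \<in> Sh) \<longrightarrow> P u"
    proof (intro allI impI)
      fix u :: "nat \<Rightarrow> real^'m" assume "\<forall>i. u i \<in> Sh"
      then have "\<forall>i. \<exists>vw. u i = shear g H (fst vw) (snd vw)" unfolding Sh_def by auto
      then obtain f where f: "\<forall>i. u i = shear g H (fst (f i)) (snd (f i))" by metis
      then have "u = (\<lambda>i. shear g H (fst (f i)) (snd (f i)))" by auto
      then show "P u" using A by simp
    qed
  next
    assume "\<forall>u::nat \<Rightarrow> real^'m. (\<forall>i. u i \<in> Sh) \<longrightarrow> P u"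
    then show "\<forall>Xs Ys. P (\<lambda>i. shear g H (Xs i) (Ys i))"
    proof (intro allI)
      fix Xs Ys :: "nat \<Rightarrow> real^'n"
      assume B: "\<forall>u::nat \<Rightarrow> real^'m. (\<forall>i. u i \<in> Sh) \<longrightarrow> P u"
      have "\<forall>i. shear g H (Xs i) (Ys i) \<in> Sh" unfolding Sh_def by blast
      then show "P (\<lambda>i. shear g H (Xs i) (Ys i))" using spec[OF B, of "\<lambda>i. shear g H (Xs i) (Ys i)"] by simp
    qed
  qed
  also have "\<dots> \<longleftrightarrow> dim Sh < q"
    unfolding P_def by (rule fam_dep_iff) (auto simp: Sh_def)
  also have "dim Sh = dim (shear_space (induced_metric L b) H)"
    unfolding shear_space_def Sh_def g_def by simp
  finally show ?thesis .
qed

theorem proposition3p4: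
  fixes S :: "'p set"
    and dPhi :: "'p \<Rightarrow> real^'n \<Rightarrow> real^'m"
    and gbar :: "'p \<Rightarrow> real^'m \<Rightarrow> real^'m \<Rightarrow> real"
    and h :: "'p \<Rightarrow> real^'n \<Rightarrow> real^'n \<Rightarrow> real^'m"
    and k m :: nat
  assumes nonempty: "S \<noteq> {}"
    and codim: "CARD('m) = CARD('n) + k"
    and dPhi_lin: "\<And>p. p \<in> S \<Longrightarrow> linear (dPhi p)"
    and dPhi_inj: "\<And>p. p \<in> S \<Longrightarrow> inj (dPhi p)"
    and gbar_bilin: "\<And>p. p \<in> S \<Longrightarrow> bilinear (gbar p)"
    and gbar_sym: "\<And>p u v. p \<in> S \<Longrightarrow> gbar p u v = gbar p v u"
    and gbar_nondeg: "\<And>p u. p \<in> S \<Longrightarrow> (\<forall>v. gbar p u v = 0) \<Longrightarrow> u = 0"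
    and g_posdef: "\<And>p X. p \<in> S \<Longrightarrow> X \<noteq> 0 \<Longrightarrow> induced_metric (dPhi p) (gbar p) X X > 0"
    and h_bilin: "\<And>p. p \<in> S \<Longrightarrow> bilinear (h p)"
    and h_sym: "\<And>p X Y. p \<in> S \<Longrightarrow> h p X Y = h p Y X"
    and h_normal: "\<And>p X Y. p \<in> S \<Longrightarrow> h p X Y \<in> normal_space (dPhi p) (gbar p)"
    and const_dim: "\<exists>d. \<forall>p\<in>S. dim (shear_space (induced_metric (dPhi p) (gbar p)) (h p)) = d"
    and m_le: "m \<le> k"
  shows "(\<forall>p\<in>S. dim (umbilical_space (dPhi p) (gbar p) (h p)) = m) \<longleftrightarrow>
         ((\<forall>p\<in>S. wedge_shear_zero (k - m + 1) (dPhi p) (gbar p) (h p)) \<and>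
          \<not> (\<forall>p\<in>S. wedge_shear_zero (k - m) (dPhi p) (gbar p) (h p)))"
proof -
  define ds where "ds p = dim (shear_space (induced_metric (dPhi p) (gbar p)) (h p))" for p
  have pw: "dim (umbilical_space (dPhi p) (gbar p) (h p)) + CARD('n) + ds p = CARD('m)" if "p \<in> S" for p
    unfolding ds_def
    by (rule pointwise) (use that dPhi_lin dPhi_inj gbar_bilin gbar_sym gbar_nondeg g_posdef h_bilin h_normal in auto)
  have wz: "wedge_shear_zero q (dPhi p) (gbar p) (h p) \<longleftrightarrow> ds p < q" if "p \<in> S" for p q
    unfolding ds_def by (rule wsz_iff) (use that gbar_bilin gbar_nondeg in auto)
  obtain d where d: "\<forall>p\<in>S. ds p = d" using const_dim unfolding ds_def by blast
  obtain p0 where p0: "p0 \<in> S" using nonempty by blast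
  have dk: "d \<le> k" using pw[OF p0] d p0 codim by auto
  have U: "dim (umbilical_space (dPhi p) (gbar p) (h p)) = k - d" if "p \<in> S" for p
    using pw[OF that] d that codim by auto
  have "(\<forall>p\<in>S. dim (umbilical_space (dPhi p) (gbar p) (h p)) = m) \<longleftrightarrow> k - d = m"
    using U p0 by auto
  moreover have "((\<forall>p\<in>S. wedge_shear_zero (k - m + 1) (dPhi p) (gbar p) (h p)) \<and>
          \<not> (\<forall>p\<in>S. wedge_shear_zero (k - m) (dPhi p) (gbar p) (h p))) \<longleftrightarrow>
          d < k - m + 1 \<and> \<not> d < k - m"
    using wz d p0 by auto
  ultimately show ?thesis using dk m_le by auto
qed

end
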